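(* Let $(V,P)$ be a finite, connected, lazy, reversible Markov chain equipped with the combinatorial distance, and assume every edge has non-negative Ollivier sectional curvature. Then \[ \alpha_{\operatorname{mod}}\ge\inf_{x\sim y}\kappa(x,y). \]
   Context: Lazy means $\sum_yP(x,y)=1$ and $P(x,x)\ge\frac12$; $P$ has symmetric support; $m$ is the probability measure with $m(x)P(x,y)=m(y)P(y,x)$. $x\sim y$ means $x\neq y$ and $P(x,y)>0$; $d$ is the combinatorial (edge-count) distance. $\Delta f(x)=\sum_zP(x,z)(f(z)-f(x))$, $\langle f,g\rangle=\sum f g\, m$, $\mathcal E(f,g)=-\langle\Delta f,g\rangle$. For positive $f$ with $\langle f,1\rangle=1$, $\operatorname{Ent}(f)=\langle f,\log f\rangle$; the modified log-Sobolev constant is $\alpha_{\operatorname{mod}}=\inf\{\mathcal E(f,\log f)/\operatorname{Ent}(f)\}$ over non-constant positive $f$ with $\langle f,1\rangle=1$. Ollivier curvature: $\kappa(x,y)=\inf\{(\Delta f(x)-\Delta f(y))/d(x,y): f\text{ 1-Lipschitz w.r.t. }d,\ f(y)-f(x)=d(x,y)\}$. An edge $x\sim y$ has non-negative Ollivier sectional curvature if there is a coupling $\pi$ of $P(x,\cdot)$ and $P(y,\cdot)$ with $d(x',y')\le1$ whenever $\pi(x',y')>0$. *)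

theory Defs
  imports Main "HOL-Library.Transitive_Closure_Table" Complex_Main
begin

definition adj :: "('a \<Rightarrow> 'a \<Rightarrow> real) \<Rightarrow> 'a \<Rightarrow> 'a \<Rightarrow> bool" where
  "adj P x y \<longleftrightarrow> x \<noteq> y \<and> P x y > 0"

definition markov_kernel :: "('a::finite \<Rightarrow> 'a \<Rightarrow> real) \<Rightarrow> bool" where
  "markov_kernel P \<longleftrightarrow> (\<forall>x y. P x y \<ge> 0) \<and> (\<forall>x. (\<Sum>y\<in>UNIV. P x y) = 1)"

definition lazy :: "('a::finite \<Rightarrow> 'a \<Rightarrow> real) \<Rightarrow> bool" where
  "lazy P \<longleftrightarrow> markov_kernel P \<and> (\<forall>x. P x x \<ge> 1/2)"

definition symmetric_support :: "('a \<Rightarrow> 'a \<Rightarrow> real) \<Rightarrow> bool" where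
  "symmetric_support P \<longleftrightarrow> (\<forall>x y. P x y > 0 \<longleftrightarrow> P y x > 0)"

definition reversible_prob :: "('a::finite \<Rightarrow> 'a \<Rightarrow> real) \<Rightarrow> ('a \<Rightarrow> real) \<Rightarrow> bool" where
  "reversible_prob P m \<longleftrightarrow> (\<forall>x. m x \<ge> 0) \<and> (\<Sum>x\<in>UNIV. m x) = 1 \<and>
     (\<forall>x y. m x * P x y = m y * P y x)"

definition connected_chain :: "('a \<Rightarrow> 'a \<Rightarrow> real) \<Rightarrow> bool" where
  "connected_chain P \<longleftrightarrow> (\<forall>x y. (adj P)\<^sup>*\<^sup>* x y)"

definition dist_comb :: "('a \<Rightarrow> 'a \<Rightarrow> real) \<Rightarrow> 'a \<Rightarrow> 'a \<Rightarrow> nat" where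
  "dist_comb P x y = (LEAST n. (adj P ^^ n) x y)"

definition laplacian :: "('a::finite \<Rightarrow> 'a \<Rightarrow> real) \<Rightarrow> ('a \<Rightarrow> real) \<Rightarrow> 'a \<Rightarrow> real" where
  "laplacian P f x = (\<Sum>z\<in>UNIV. P x z * (f z - f x))"

definition inner_m :: "('a::finite \<Rightarrow> real) \<Rightarrow> ('a \<Rightarrow> real) \<Rightarrow> ('a \<Rightarrow> real) \<Rightarrow> real" where
  "inner_m m f g = (\<Sum>x\<in>UNIV. f x * g x * m x)"

definition dirichlet :: "('a::finite \<Rightarrow> 'a \<Rightarrow> real) \<Rightarrow> ('a \<Rightarrow> real) \<Rightarrow> ('a \<Rightarrow> real) \<Rightarrow> ('a \<Rightarrow> real) \<Rightarrow> real" where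
  "dirichlet P m f g = - inner_m m (laplacian P f) g"

definition Ent :: "('a::finite \<Rightarrow> real) \<Rightarrow> ('a \<Rightarrow> real) \<Rightarrow> real" where
  "Ent m f = inner_m m f (\<lambda>x. ln (f x))"

definition alpha_mod :: "('a::finite \<Rightarrow> 'a \<Rightarrow> real) \<Rightarrow> ('a \<Rightarrow> real) \<Rightarrow> real" where
  "alpha_mod P m = Inf {dirichlet P m f (\<lambda>x. ln (f x)) / Ent m f | f.
      (\<forall>x. f x > 0) \<and> inner_m m f (\<lambda>_. 1) = 1 \<and> (\<exists>x y. f x \<noteq> f y)}"

definition lipschitz1 :: "('a \<Rightarrow> 'a \<Rightarrow> real) \<Rightarrow> ('a \<Rightarrow> real) \<Rightarrow> bool" where
  "lipschitz1 P f \<longleftrightarrow> (\<forall>x y. \<bar>f x - f y\<bar> \<le> real (dist_comb P x y))"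

definition ollivier :: "('a::finite \<Rightarrow> 'a \<Rightarrow> real) \<Rightarrow> 'a \<Rightarrow> 'a \<Rightarrow> real" where
  "ollivier P x y = Inf {(laplacian P f x - laplacian P f y) / real (dist_comb P x y) | f.
      lipschitz1 P f \<and> f y - f x = real (dist_comb P x y)}"

definition nonneg_sectional :: "('a::finite \<Rightarrow> 'a \<Rightarrow> real) \<Rightarrow> 'a \<Rightarrow> 'a \<Rightarrow> bool" where
  "nonneg_sectional P x y \<longleftrightarrow> (\<exists>\<pi> :: 'a \<Rightarrow> 'a \<Rightarrow> real.
      (\<forall>x' y'. \<pi> x' y' \<ge> 0) \<and>
      (\<forall>x'. (\<Sum>y'\<in>UNIV. \<pi> x' y') = P x x') \<and>
      (\<forall>y'. (\<Sum>x'\<in>UNIV. \<pi> x' y') = P y y') \<and>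
      (\<forall>x' y'. \<pi> x' y' > 0 \<longrightarrow> dist_comb P x' y' \<le> 1))"

end

theory Submission
  imports Defs "HOL-Analysis.Analysis"
begin

context
  fixes P :: "'a::finite \<Rightarrow> 'a \<Rightarrow> real" and m :: "'a \<Rightarrow> real"
  assumes lz: "lazy P" and ss: "symmetric_support P" and rv: "reversible_prob P m"
    and cc: "connected_chain P"
begin

lemma P_nonneg: "P x y \<ge> 0"
  using lz by (simp add: lazy_def markov_kernel_def)

lemma P_sum: "(\<Sum>y\<in>UNIV. P x y) = 1"
  using lz by (simp add: lazy_def markov_kernel_def)

lemma adj_sym: "adj P x y \<Longrightarrow> adj P y x"
  using ss by (auto simp: adj_def symmetric_support_def)

lemma m_rev: "m x * P x y = m y * P y x"
  using rv by (simp add: reversible_prob_def)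

lemma m_pos: "m x > 0"
proof (rule ccontr)
  assume "\<not> m x > 0"
  moreover have "m x \<ge> 0" using rv by (simp add: reversible_prob_def)
  ultimately have m0: "m x = 0" by linarith
  have "m y = 0" for y
  proof -
    have "(adj P)\<^sup>*\<^sup>* x y" using cc by (simp add: connected_chain_def)
    then show ?thesis
    proof (induction rule: rtranclp_induct)
      case base then show ?case using m0 .
    next
      case (step u v)
      have "m u * P u v = m v * P v u" by (rule m_rev)
      moreover have "P v u > 0" using adj_sym[OF step(2)] by (simp add: adj_def)
      ultimately show ?case using step(3) by simp
    qed
  qed
  then have "(\<Sum>y\<in>UNIV. m y) = 0" by simp
  with rv show False by (simp add: reversible_prob_def)
qed

lemma dist_path: "(adj P ^^ dist_comb P x y) x y"
proof -
  have "\<exists>n. (adj P ^^ n) x y" using cc by (simp add: connected_chain_def rtranclp_power)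
  then show ?thesis unfolding dist_comb_def by (rule LeastI_ex)
qed

lemma dist_adj: "adj P x y \<Longrightarrow> dist_comb P x y = 1"
  unfolding dist_comb_def
proof (rule Least_equality)
  assume "adj P x y" then show "(adj P ^^ 1) x y" by (simp only: relpowp_1)
next
  fix n assume a: "adj P x y" "(adj P ^^ n) x y"
  show "1 \<le> n"
  proof (rule ccontr)
    assume "\<not> 1 \<le> n" then have "n = 0" by simp
    with a have "x = y" by simp
    with a show False by (simp add: adj_def)
  qed
qed

lemma dist_le1: "dist_comb P u v \<le> 1 \<Longrightarrow> u = v \<or> adj P u v"
proof -
  assume "dist_comb P u v \<le> 1"
  then have "dist_comb P u v = 0 \<or> dist_comb P u v = 1" by auto
  then show ?thesis using dist_path[of u v] by auto
qed

lemma lip_path: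
  assumes "\<And>u v. adj P u v \<Longrightarrow> \<bar>g u - g v\<bar> \<le> L"
  shows "(adj P ^^ n) x y \<Longrightarrow> \<bar>g x - g y\<bar> \<le> real n * L"
proof (induction n arbitrary: y)
  case 0 then show ?case by simp
next
  case (Suc n)
  then obtain z where z: "(adj P ^^ n) x z" "adj P z y" by (auto elim: relpowp_Suc_E)
  have "\<bar>g x - g y\<bar> \<le> \<bar>g x - g z\<bar> + \<bar>g z - g y\<bar>" by linarith
  also have "\<dots> \<le> real n * L + L" using Suc.IH[OF z(1)] assms[OF z(2)] by linarith
  finally show ?case by (simp add: algebra_simps)
qed

definition Dmax :: nat where "Dmax = Max (range (\<lambda>(a,b). dist_comb P a b))"

lemma dist_le_Dmax: "dist_comb P a b \<le> Dmax"
  unfolding Dmax_def by (rule Max_ge) (auto intro: image_eqI[where x="(a,b)"])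

lemma lap_bound:
  assumes "lipschitz1 P h"
  shows "\<bar>laplacian P h x\<bar> \<le> real Dmax"
proof -
  have "\<bar>laplacian P h x\<bar> \<le> (\<Sum>z\<in>UNIV. \<bar>P x z * (h z - h x)\<bar>)"
    unfolding laplacian_def by (rule sum_abs)
  also have "\<dots> \<le> (\<Sum>z\<in>UNIV. P x z * real Dmax)"
  proof (rule sum_mono)
    fix z
    have "\<bar>h z - h x\<bar> \<le> real (dist_comb P z x)" using assms by (simp add: lipschitz1_def)
    also have "\<dots> \<le> real Dmax" using dist_le_Dmax by simp
    finally show "\<bar>P x z * (h z - h x)\<bar> \<le> P x z * real Dmax"
      using P_nonneg[of x z] by (simp add: abs_mult mult_left_mono)
  qed
  also have "\<dots> = real Dmax" using P_sum by (simp add: sum_distrib_right[symmetric])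
  finally show ?thesis .
qed

lemma K_le:
  assumes "adj P x y" "lipschitz1 P h" "h y - h x = 1"
  shows "Inf {ollivier P x y | x y. adj P x y} \<le> laplacian P h x - laplacian P h y"
proof -
  have fin: "finite {ollivier P x y | x y. adj P x y}"
  proof -
    have "{ollivier P x y | x y. adj P x y} \<subseteq> (\<lambda>(x,y). ollivier P x y) ` UNIV" by auto
    then show ?thesis by (rule finite_subset) simp
  qed
  have "Inf {ollivier P x y | x y. adj P x y} \<le> ollivier P x y"
    by (rule cInf_lower) (use assms(1) fin in \<open>auto intro: bdd_below_finite\<close>)
  also have "ollivier P x y \<le> laplacian P h x - laplacian P h y"
    unfolding ollivier_def
  proof (rule cInf_lower)
    show "laplacian P h x - laplacian P h y \<in> {(laplacian P f x - laplacian P f y) / real (dist_comb P x y) |f.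
          lipschitz1 P f \<and> f y - f x = real (dist_comb P x y)}"
      using assms by (auto simp: dist_adj)
    show "bdd_below {(laplacian P f x - laplacian P f y) / real (dist_comb P x y) |f.
          lipschitz1 P f \<and> f y - f x = real (dist_comb P x y)}"
    proof (rule bdd_belowI[where m="- 2 * real Dmax"], clarify)
      fix f assume "lipschitz1 P f"
      then have "\<bar>laplacian P f x\<bar> \<le> real Dmax" "\<bar>laplacian P f y\<bar> \<le> real Dmax"
        by (auto intro: lap_bound)
      then show "- 2 * real Dmax \<le> (laplacian P f x - laplacian P f y) / real (dist_comb P x y)"
        using dist_adj[OF assms(1)] by simp
    qed
  qed
  finally show ?thesis .
qed


lemma lap_expand: "laplacian P f x = (\<Sum>z\<in>UNIV. P x z * f z) - f x"
proof -
  have "laplacian P f x = (\<Sum>z\<in>UNIV. P x z * f z) - (\<Sum>z\<in>UNIV. P x z) * f x"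
    unfolding laplacian_def by (simp add: right_diff_distrib sum_subtractf sum_distrib_right)
  then show ?thesis using P_sum by simp
qed

lemma lap_lin: "laplacian P (\<lambda>x. f x + t * h x) x = laplacian P f x + t * laplacian P h x"
  unfolding laplacian_def sum_distrib_left sum.distrib[symmetric] by (rule sum.cong) (auto simp: algebra_simps)

lemma selfadj: "(\<Sum>x\<in>UNIV. laplacian P h x * g x * m x) = (\<Sum>x\<in>UNIV. h x * laplacian P g x * m x)"
proof -
  have A: "(\<Sum>x\<in>UNIV. \<Sum>z\<in>UNIV. m x * P x z * h z * g x) = (\<Sum>x\<in>UNIV. \<Sum>z\<in>UNIV. m x * P x z * h x * g z)"
  proof -
    have "(\<Sum>x\<in>UNIV. \<Sum>z\<in>UNIV. m x * P x z * h z * g x) = (\<Sum>x\<in>UNIV. \<Sum>z\<in>UNIV. m z * P z x * h z * g x)"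
      by (simp add: m_rev)
    also have "\<dots> = (\<Sum>z\<in>UNIV. \<Sum>x\<in>UNIV. m z * P z x * h z * g x)" by (rule sum.swap)
    finally show ?thesis .
  qed
  have L: "(\<Sum>x\<in>UNIV. laplacian P h x * g x * m x) = (\<Sum>x\<in>UNIV. \<Sum>z\<in>UNIV. m x * P x z * h z * g x) - (\<Sum>x\<in>UNIV. h x * g x * m x)"
    by (simp add: lap_expand algebra_simps sum_subtractf sum_distrib_left sum_distrib_right)
  have R: "(\<Sum>x\<in>UNIV. h x * laplacian P g x * m x) = (\<Sum>x\<in>UNIV. \<Sum>z\<in>UNIV. m x * P x z * h x * g z) - (\<Sum>x\<in>UNIV. h x * g x * m x)"
    by (simp add: lap_expand algebra_simps sum_subtractf sum_distrib_left sum_distrib_right)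
  show ?thesis using A L R by simp
qed

definition Fa :: "real \<Rightarrow> ('a \<Rightarrow> real) \<Rightarrow> real" where
  "Fa \<alpha> f = dirichlet P m f (\<lambda>x. ln (f x)) - \<alpha> * Ent m f"

definition rr :: "real \<Rightarrow> ('a \<Rightarrow> real) \<Rightarrow> 'a \<Rightarrow> real" where
  "rr \<alpha> f z = - laplacian P (\<lambda>x. ln (f x)) z - laplacian P f z / f z - \<alpha> * (ln (f z) + 1)"

lemma Fa_deriv:
  assumes fpos: "\<And>x. f x > 0"
  shows "((\<lambda>t. Fa \<alpha> (\<lambda>x. f x + t * h x)) has_real_derivative (\<Sum>x\<in>UNIV. m x * h x * rr \<alpha> f x)) (at 0)"
proof -
  define T where "T x t = - ((laplacian P f x + t * laplacian P h x) * ln (f x + t * h x) * m x)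
      - \<alpha> * ((f x + t * h x) * ln (f x + t * h x) * m x)" for x t
  have eq: "(\<lambda>t. Fa \<alpha> (\<lambda>x. f x + t * h x)) = (\<lambda>t. \<Sum>x\<in>UNIV. T x t)"
    unfolding Fa_def dirichlet_def Ent_def inner_m_def lap_lin T_def
    by (simp only: sum_subtractf sum_negf sum_distrib_left)
  define T' where "T' x = - (laplacian P h x * ln (f x) + laplacian P f x * (h x / f x)) * m x
      - \<alpha> * ((h x * ln (f x) + f x * (h x / f x)) * m x)" for x
  have dT: "((\<lambda>t. T x t) has_real_derivative T' x) (at 0)" for x
  proof -
    have "((\<lambda>t. T x t) has_real_derivative
       - ((laplacian P h x * ln (f x + 0 * h x) + (laplacian P f x + 0 * laplacian P h x) * (h x / (f x + 0 * h x))) * m x)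
      - \<alpha> * ((h x * ln (f x + 0 * h x) + (f x + 0 * h x) * (h x / (f x + 0 * h x))) * m x)) (at 0)"
      unfolding T_def using fpos[of x]
      by (auto intro!: derivative_eq_intros simp: algebra_simps)
    then show ?thesis by (simp add: T'_def algebra_simps)
  qed
  have "((\<lambda>t. \<Sum>x\<in>UNIV. T x t) has_real_derivative (\<Sum>x\<in>UNIV. T' x)) (at 0)"
    by (rule DERIV_sum) (rule dT)
  moreover have "(\<Sum>x\<in>UNIV. T' x) = (\<Sum>x\<in>UNIV. m x * h x * rr \<alpha> f x)"
  proof -
    have s1: "(\<Sum>x\<in>UNIV. laplacian P h x * ln (f x) * m x) = (\<Sum>x\<in>UNIV. h x * laplacian P (\<lambda>x. ln (f x)) x * m x)"
      by (rule selfadj)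
    have "(\<Sum>x\<in>UNIV. T' x) = - (\<Sum>x\<in>UNIV. laplacian P h x * ln (f x) * m x)
        - (\<Sum>x\<in>UNIV. laplacian P f x * (h x / f x) * m x) - \<alpha> * (\<Sum>x\<in>UNIV. (h x * ln (f x) + h x) * m x)"
      using fpos by (simp add: T'_def algebra_simps sum_subtractf sum.distrib sum_distrib_left sum_negf less_imp_neq[symmetric])
    also have "\<dots> = (\<Sum>x\<in>UNIV. m x * h x * rr \<alpha> f x)"
      unfolding s1 rr_def by (simp add: algebra_simps sum_subtractf sum.distrib sum_distrib_left sum_negf)
    finally show ?thesis .
  qed
  ultimately show ?thesis using eq by simp
qed


definition Cset :: "real \<Rightarrow> ('a \<Rightarrow> real) set" where
  "Cset \<delta> = {g. (\<forall>x. g x \<ge> \<delta>) \<and> inner_m m g (\<lambda>_. 1) = 1}"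

lemma KKT:
  assumes dpos: "\<delta> > 0" and fC: "f \<in> Cset \<delta>" and minf: "\<forall>g\<in>Cset \<delta>. Fa \<alpha> f \<le> Fa \<alpha> g"
    and fb: "f b > \<delta>"
  shows "rr \<alpha> f a \<ge> rr \<alpha> f b"
proof (rule ccontr)
  assume neg: "\<not> rr \<alpha> f a \<ge> rr \<alpha> f b"
  then have ab: "a \<noteq> b" by auto
  have fpos: "\<And>x. f x > 0" using fC dpos by (auto simp: Cset_def intro: less_le_trans)
  define h where "h z = (if z = a then 1 / m a else 0) - (if z = b then 1 / m b else 0)" for z
  have ma: "m a > 0" and mb: "m b > 0" using m_pos by auto
  have hs: "(\<Sum>x\<in>UNIV. m x * h x * rr \<alpha> f x) = rr \<alpha> f a - rr \<alpha> f b"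
  proof -
    have "(\<Sum>x\<in>UNIV. m x * h x * rr \<alpha> f x) =
        (\<Sum>x\<in>UNIV. (if x = a then rr \<alpha> f a else 0)) - (\<Sum>x\<in>UNIV. (if x = b then rr \<alpha> f b else 0))"
      unfolding sum_subtractf[symmetric] by (rule sum.cong) (use ma mb in \<open>auto simp: h_def\<close>)
    then show ?thesis by simp
  qed
  have hm: "(\<Sum>x\<in>UNIV. h x * m x) = 0"
  proof -
    have "(\<Sum>x\<in>UNIV. h x * m x) =
        (\<Sum>x\<in>UNIV. (if x = a then 1 else 0)) - (\<Sum>x\<in>UNIV. (if x = b then 1 else 0))"
      unfolding sum_subtractf[symmetric] by (rule sum.cong) (use ma mb in \<open>auto simp: h_def\<close>)
    then show ?thesis by simp
  qed
  have der: "((\<lambda>t. Fa \<alpha> (\<lambda>x. f x + t * h x)) has_real_derivative rr \<alpha> f a - rr \<alpha> f b) (at 0)"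
    using Fa_deriv[where f=f and h=h and \<alpha>=\<alpha>, OF fpos] hs by simp
  obtain d where d: "d > 0" "\<And>t. t > 0 \<Longrightarrow> t < d \<Longrightarrow> Fa \<alpha> (\<lambda>x. f x + (0 + t) * h x) < Fa \<alpha> (\<lambda>x. f x + 0 * h x)"
    using DERIV_neg_dec_right[OF der] neg by force
  define t where "t = min (d / 2) ((f b - \<delta>) * m b)"
  have t: "t > 0" "t < d" using d(1) fb mb by (auto simp: t_def)
  have tb: "t / m b \<le> f b - \<delta>" using mb by (simp add: t_def min_def field_simps split: if_splits)
  have gC: "(\<lambda>x. f x + t * h x) \<in> Cset \<delta>"
  proof -
    have "f x + t * h x \<ge> \<delta>" for x
    proof -
      have fx: "f x \<ge> \<delta>" using fC by (simp add: Cset_def)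
      show ?thesis
      proof (cases "x = b")
        case True then show ?thesis using ab tb by (simp add: h_def)
      next
        case False
        have "t / m a > 0" using t ma by simp
        then show ?thesis using fx False by (auto simp: h_def)
      qed
    qed
    moreover have "inner_m m (\<lambda>x. f x + t * h x) (\<lambda>_. 1) = 1"
    proof -
      have "inner_m m (\<lambda>x. f x + t * h x) (\<lambda>_. 1) = inner_m m f (\<lambda>_. 1) + t * (\<Sum>x\<in>UNIV. h x * m x)"
        by (simp add: inner_m_def algebra_simps sum.distrib sum_distrib_left)
      then show ?thesis using fC hm by (simp add: Cset_def)
    qed
    ultimately show ?thesis by (simp add: Cset_def)
  qed
  have "Fa \<alpha> (\<lambda>x. f x + t * h x) < Fa \<alpha> f" using d(2)[OF t] by simp
  with minf gC show False by force
qed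


lemma lap_scale: "laplacian P (\<lambda>z. g z / c) x = laplacian P g x / c"
  unfolding laplacian_def sum_divide_distrib by (rule sum.cong) (auto simp: diff_divide_distrib[symmetric])

lemma const_of_edges:
  assumes "\<And>p q. adj P p q \<Longrightarrow> f p = f q"
  shows "f u = f v"
proof -
  have "(adj P)\<^sup>*\<^sup>* u v" using cc by (simp add: connected_chain_def)
  then show ?thesis
    by (induction rule: rtranclp_induct) (auto dest: assms)
qed

lemma maxprin:
  assumes nsec: "\<And>x y. adj P x y \<Longrightarrow> nonneg_sectional P x y"
    and dpos: "\<delta> > 0" and fC: "f \<in> Cset \<delta>" and minf: "\<forall>g\<in>Cset \<delta>. Fa \<alpha> f \<le> Fa \<alpha> g"
    and aK: "\<alpha> < Inf {ollivier P x y | x y. adj P x y}"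
  shows "f u = f v"
proof (rule ccontr)
  assume nc: "f u \<noteq> f v"
  define K where "K = Inf {ollivier P x y | x y. adj P x y}"
  have fpos: "\<And>x. f x > 0" using fC dpos by (auto simp: Cset_def intro: less_le_trans)
  have fge: "\<And>x. f x \<ge> \<delta>" using fC by (auto simp: Cset_def)
  define g where "g z = ln (f z)" for z
  obtain p q where pq: "adj P p q" "f p \<noteq> f q" using const_of_edges[of f u v] nc by blast
  define E where "E = {(p,q). adj P p q}"
  have Efin: "finite E" by simp
  have pqE: "(p,q) \<in> E" "(q,p) \<in> E" using pq adj_sym by (auto simp: E_def)
  define L where "L = Max ((\<lambda>(p,q). g q - g p) ` E)"
  have Lge: "\<And>p q. adj P p q \<Longrightarrow> g q - g p \<le> L"
    unfolding L_def by (rule Max_ge) (auto simp: E_def)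
  have "L \<in> (\<lambda>(p,q). g q - g p) ` E" unfolding L_def
    by (rule Max_in) (use pqE in auto)
  then obtain x y where xy: "adj P x y" "g y - g x = L" by (auto simp: E_def)
  have "g p \<noteq> g q" using pq fpos by (auto simp: g_def)
  then have Lpos: "L > 0" using Lge[OF pq(1)] Lge[OF adj_sym[OF pq(1)]] by linarith
  have absL: "\<bar>g a - g b\<bar> \<le> L" if "adj P a b" for a b
    using Lge[OF that] Lge[OF adj_sym[OF that]] by linarith
  define hL where "hL z = g z / L" for z
  have lipL: "lipschitz1 P hL"
    unfolding lipschitz1_def
  proof (intro allI)
    fix a b
    have "\<bar>g a - g b\<bar> \<le> real (dist_comb P a b) * L"
      by (rule lip_path[OF absL dist_path])
    then show "\<bar>hL a - hL b\<bar> \<le> real (dist_comb P a b)"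
      using Lpos by (simp add: hL_def diff_divide_distrib[symmetric] field_simps)
  qed
  have h1: "hL y - hL x = 1" using xy Lpos by (simp add: hL_def diff_divide_distrib[symmetric])
  have "K \<le> laplacian P hL x - laplacian P hL y"
    unfolding K_def by (rule K_le[OF xy(1) lipL h1])
  also have "\<dots> = (laplacian P g x - laplacian P g y) / L"
    unfolding hL_def lap_scale by (simp add: diff_divide_distrib)
  finally have curv: "laplacian P g x - laplacian P g y \<ge> K * L"
    using Lpos by (simp add: field_simps)
  have fyx: "f y > f x" using xy Lpos fpos by (auto simp: g_def)
  have kkt: "rr \<alpha> f x \<ge> rr \<alpha> f y"
    by (rule KKT[OF dpos fC minf]) (use fyx fge[of x] in linarith)
  obtain \<pi> where pi: "\<And>a b. \<pi> a b \<ge> 0" "\<And>a. (\<Sum>b\<in>UNIV. \<pi> a b) = P x a"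
      "\<And>b. (\<Sum>a\<in>UNIV. \<pi> a b) = P y b" "\<And>a b. \<pi> a b > 0 \<Longrightarrow> dist_comb P a b \<le> 1"
    using nsec[OF xy(1)] unfolding nonneg_sectional_def by blast
  define A where "A z = (\<Sum>u\<in>UNIV. P z u * f u) / f z" for z
  have lapA: "laplacian P f z / f z = A z - 1" for z
    using fpos[of z] by (simp add: lap_expand A_def diff_divide_distrib)
  have Ax: "A x = (\<Sum>a\<in>UNIV. \<Sum>b\<in>UNIV. \<pi> a b * (f a / f x))"
    unfolding A_def pi(2)[symmetric] by (simp add: sum_distrib_right sum_divide_distrib)
  have Ay: "A y = (\<Sum>a\<in>UNIV. \<Sum>b\<in>UNIV. \<pi> a b * (f b / f y))"
  proof -
    have "A y = (\<Sum>b\<in>UNIV. \<Sum>a\<in>UNIV. \<pi> a b * (f b / f y))"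
      unfolding A_def pi(3)[symmetric] by (simp add: sum_distrib_right sum_divide_distrib)
    also have "\<dots> = (\<Sum>a\<in>UNIV. \<Sum>b\<in>UNIV. \<pi> a b * (f b / f y))" by (rule sum.swap)
    finally show ?thesis .
  qed
  have trm: "\<pi> a b * (f b / f y) \<le> \<pi> a b * (f a / f x)" for a b
  proof (cases "\<pi> a b > 0")
    case False then have "\<pi> a b = 0" using pi(1)[of a b] by linarith
    then show ?thesis by simp
  next
    case True
    then have "a = b \<or> adj P a b" using pi(4) dist_le1 by blast
    then have "g b - g a \<le> g y - g x" using Lge xy Lpos by auto
    then have "ln (f b) + ln (f x) \<le> ln (f y) + ln (f a)" by (simp add: g_def)
    then have "ln (f b * f x) \<le> ln (f y * f a)"
      using fpos[of b] fpos[of x] fpos[of y] fpos[of a] by (simp add: ln_mult)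
    then have "f b * f x \<le> f y * f a" using fpos by (simp add: mult_pos_pos)
    then have "f b / f y \<le> f a / f x" using fpos[of x] fpos[of y] by (simp add: field_simps)
    then show ?thesis using pi(1)[of a b] by (rule mult_left_mono)
  qed
  have AxAy: "A y \<le> A x" unfolding Ax Ay
    by (intro sum_mono) (rule trm)
  have "\<alpha> * L \<ge> (laplacian P g x - laplacian P g y) + (A x - A y)"
    using kkt xy(2) unfolding rr_def lapA g_def[symmetric] by (simp add: algebra_simps)
  then have "\<alpha> * L \<ge> K * L" using curv AxAy by linarith
  then have "\<alpha> \<ge> K" using Lpos by simp
  with aK show False by (simp add: K_def)
qed


lemma exists_min:
  assumes dpos: "\<delta> > 0" and ne: "Cset \<delta> \<noteq> {}"
  shows "\<exists>f\<in>Cset \<delta>. \<forall>g\<in>Cset \<delta>. Fa \<alpha> f \<le> Fa \<alpha> g"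
proof -
  define S where "S = {v :: real^'a. (\<forall>i. \<delta> \<le> v$i) \<and> (\<Sum>x\<in>UNIV. v$x * 1 * m x) = 1}"
  define G where "G v = Fa \<alpha> (\<lambda>i. v$i)" for v :: "real^'a"
  have SC: "(\<lambda>i. v$i) \<in> Cset \<delta>" if "v \<in> S" for v
    using that by (simp add: S_def Cset_def inner_m_def)
  have CS: "vec_lambda g \<in> S" if "g \<in> Cset \<delta>" for g
    using that by (simp add: S_def Cset_def inner_m_def)
  have closedS: "closed S"
    unfolding S_def
    by (intro closed_Collect_conj closed_Collect_all closed_Collect_le closed_Collect_eq continuous_intros)
  define ub :: "real^'a" where "ub = (\<chi> i. 1 / m i)"
  define lb :: "real^'a" where "lb = (\<chi> i. \<delta>)"
  have sub: "S \<subseteq> cbox lb ub"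
  proof
    fix v assume v: "v \<in> S"
    have "v$i \<le> 1 / m i" for i
    proof -
      have nn: "\<forall>x\<in>UNIV. 0 \<le> v$x * 1 * m x"
      proof
        fix x
        have "0 \<le> v$x" using v dpos by (simp add: S_def) (meson less_imp_le order.trans)
        then show "0 \<le> v$x * 1 * m x" using m_pos[of x] by simp
      qed
      have "v$i * 1 * m i \<le> (\<Sum>x\<in>UNIV. v$x * 1 * m x)"
        by (rule member_le_sum) (use nn in auto)
      then have "v$i * m i \<le> 1" using v by (simp add: S_def)
      then show ?thesis using m_pos[of i] by (simp add: field_simps)
    qed
    then show "v \<in> cbox lb ub" using v by (simp add: mem_box_cart S_def lb_def ub_def)
  qed
  have compS: "compact S"
    using closedS sub by (metis compact_cbox compact_Int_closed inf.absorb_iff2)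
  have Sne: "S \<noteq> {}" using ne CS by blast
  have contG: "continuous_on S G"
  proof -
    have pos: "\<forall>v\<in>S. v$x \<noteq> 0" for x using dpos by (auto simp: S_def) (metis less_le_trans less_irrefl)
    show ?thesis
      unfolding G_def Fa_def dirichlet_def Ent_def inner_m_def laplacian_def
      by (intro continuous_intros) (use pos in auto)
  qed
  obtain v0 where v0: "v0 \<in> S" "\<forall>v\<in>S. G v0 \<le> G v"
    using continuous_attains_inf[OF compS Sne contG] by blast
  show ?thesis
  proof (intro bexI ballI)
    show "(\<lambda>i. v0$i) \<in> Cset \<delta>" by (rule SC[OF v0(1)])
    fix g assume "g \<in> Cset \<delta>"
    then have "G v0 \<le> G (vec_lambda g)" using v0(2) CS by blast
    then show "Fa \<alpha> (\<lambda>i. v0$i) \<le> Fa \<alpha> g" by (simp add: G_def)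
  qed
qed

lemma Fa_one: "Fa \<alpha> (\<lambda>_. 1) = 0"
  by (simp add: Fa_def dirichlet_def Ent_def inner_m_def laplacian_def)

lemma Fa_nonneg:
  assumes nsec: "\<And>x y. adj P x y \<Longrightarrow> nonneg_sectional P x y"
    and fpos: "\<And>x. f x > 0" and fm: "inner_m m f (\<lambda>_. 1) = 1"
    and aK: "\<alpha> < Inf {ollivier P x y | x y. adj P x y}"
  shows "Fa \<alpha> f \<ge> 0"
proof -
  define \<delta> where "\<delta> = Min (range f)"
  have dpos: "\<delta> > 0" unfolding \<delta>_def using fpos by (subst Min_gr_iff) auto
  have fC: "f \<in> Cset \<delta>" using fm by (simp add: Cset_def \<delta>_def)
  obtain f0 where f0: "f0 \<in> Cset \<delta>" "\<forall>g\<in>Cset \<delta>. Fa \<alpha> f0 \<le> Fa \<alpha> g"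
    using exists_min[OF dpos, of \<alpha>] fC by blast
  have const: "f0 u = f0 v" for u v by (rule maxprin[OF nsec dpos f0 aK])
  obtain c where c: "f0 = (\<lambda>_. c)"
    using const by (metis ext)
  have "c * (\<Sum>x\<in>UNIV. m x) = 1" using f0(1) c by (simp add: Cset_def inner_m_def sum_distrib_left)
  then have "c = 1" using rv by (simp add: reversible_prob_def)
  then have "Fa \<alpha> f0 = 0" using c Fa_one by simp
  then show ?thesis using f0(2) fC by force
qed


lemma Ent_pos:
  assumes fpos: "\<And>x. f x > 0" and fm: "inner_m m f (\<lambda>_. 1) = 1" and nc: "f a \<noteq> f b"
  shows "Ent m f > 0"
proof -
  have key: "x * ln x \<ge> x - 1" if "x > 0" for x :: real
  proof -
    have "ln (1/x) \<le> 1/x - 1" using that by (intro ln_le_minus_one) simp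
    then have "- ln x \<le> 1/x - 1" using that by (simp add: ln_div)
    then have "x * (- ln x) \<le> x * (1/x - 1)" using that by (intro mult_left_mono) auto
    then show ?thesis using that by (simp add: algebra_simps)
  qed
  have skey: "x * ln x > x - 1" if "x > 0" "x \<noteq> 1" for x :: real
  proof -
    have ln_strict: "ln y < y - 1" if "y > 0" "y \<noteq> 1" for y :: real
    proof -
      have sp: "sqrt y > 0" using that by simp
      have s1: "sqrt y \<noteq> 1" using that by simp
      have "ln (sqrt y) \<le> sqrt y - 1" by (rule ln_le_minus_one[OF sp])
      moreover have "ln y = 2 * ln (sqrt y)" using that by (simp add: ln_sqrt)
      moreover have "(sqrt y - 1)^2 > 0" using s1 by simp
      moreover have "y = (sqrt y)^2" using that by simp
      ultimately show ?thesis by (simp add: power2_eq_square algebra_simps)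
    qed
    have "ln (1/x) < 1/x - 1" using that by (intro ln_strict) auto
    then have "- ln x < 1/x - 1" using that by (simp add: ln_div)
    then have "x * (- ln x) < x * (1/x - 1)" using that by (intro mult_strict_left_mono) auto
    then show ?thesis using that by (simp add: algebra_simps)
  qed
  obtain c where c: "f c \<noteq> 1" using nc by metis
  have "(\<Sum>x\<in>UNIV. (f x - 1) * m x) < (\<Sum>x\<in>UNIV. f x * ln (f x) * m x)"
  proof (rule sum_strict_mono_ex1)
    show "\<forall>x\<in>UNIV. (f x - 1) * m x \<le> f x * ln (f x) * m x"
      using key fpos m_pos by (auto intro: mult_right_mono less_imp_le)
    show "\<exists>x\<in>UNIV. (f x - 1) * m x < f x * ln (f x) * m x"
      using skey[OF fpos c] m_pos[of c] by (auto intro: mult_strict_right_mono)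
  qed simp
  moreover have "(\<Sum>x\<in>UNIV. (f x - 1) * m x) = 0"
    using fm rv by (simp add: inner_m_def algebra_simps sum_subtractf reversible_prob_def)
  ultimately show ?thesis by (simp add: Ent_def inner_m_def)
qed

end

theorem theorem4p4:
  fixes P :: "'a::finite \<Rightarrow> 'a \<Rightarrow> real" and m :: "'a \<Rightarrow> real"
  assumes "lazy P"
    and "symmetric_support P"
    and "reversible_prob P m"
    and "connected_chain P"
    and "\<And>x y. adj P x y \<Longrightarrow> nonneg_sectional P x y"
  shows "alpha_mod P m \<ge> Inf {ollivier P x y | x y. adj P x y}"
proof -
  note A = assms(1-4)
  define K where "K = Inf {ollivier P x y | x y. adj P x y}"
  define S where "S = {dirichlet P m f (\<lambda>x. ln (f x)) / Ent m f | f.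
      (\<forall>x. f x > 0) \<and> inner_m m f (\<lambda>_. 1) = 1 \<and> (\<exists>x y. f x \<noteq> f y)}"
  have elem: "K \<le> z" if "z \<in> S" for z
  proof -
    obtain f a b where f: "z = dirichlet P m f (\<lambda>x. ln (f x)) / Ent m f" "\<And>x. f x > 0"
      "inner_m m f (\<lambda>_. 1) = 1" "f a \<noteq> f b"
      using \<open>z \<in> S\<close> unfolding S_def by blast
    have Epos: "Ent m f > 0" by (rule Ent_pos[OF A f(2) f(3) f(4)])
    define D where "D = dirichlet P m f (\<lambda>x. ln (f x))"
    have ge: "D \<ge> \<alpha> * Ent m f" if "\<alpha> < K" for \<alpha>
    proof -
      have aK: "\<alpha> < Inf {ollivier P x y | x y. adj P x y}" using that K_def by simp
      have "0 \<le> Fa P m \<alpha> f"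
        by (rule Fa_nonneg[OF A assms(5) f(2) f(3) aK])
      then show ?thesis unfolding Fa_def[OF A] D_def by linarith
    qed
    have "D \<ge> K * Ent m f"
    proof (rule ccontr)
      assume "\<not> D \<ge> K * Ent m f"
      then have lt: "D / Ent m f < K" using Epos by (simp add: field_simps)
      define \<alpha> where "\<alpha> = (D / Ent m f + K) / 2"
      have "\<alpha> < K" using lt by (simp add: \<alpha>_def)
      then have "D \<ge> \<alpha> * Ent m f" by (rule ge)
      moreover have "\<alpha> * Ent m f > D"
      proof -
        have hq: "q < (q + K) / 2" if "q < K" for q :: real using that by simp
        have "\<alpha> > D / Ent m f" using hq[OF lt] unfolding \<alpha>_def .
        then show ?thesis using Epos by (simp add: field_simps)
      qed
      ultimately show False by simp
    qed
    then have "K * Ent m f \<le> z * Ent m f" using Epos f(1) by (simp add: D_def)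
    then show ?thesis using Epos by (simp add: mult_le_cancel_right)
  qed
  show ?thesis
  proof (cases "S = {}")
    case False
    then have "K \<le> Inf S" by (intro cInf_greatest) (auto intro: elem)
    then show ?thesis by (simp add: alpha_mod_def K_def S_def)
  next
    case True
    have triv: "a = b" for a b :: 'a
    proof (rule ccontr)
      assume ab: "a \<noteq> b"
      have ma: "m a > 0" and mb: "m b > 0" using m_pos[OF A] by auto
      define f where "f z = 1 + (if z = a then (m b / 2) / m a else 0) - (if z = b then 1/2 else 0)" for z
      have "0 < 1 + m b / (2 * m a)" using ma mb by (simp add: add_pos_pos)
      then have fpos: "\<forall>x. f x > 0" using ma mb by (auto simp: f_def)
      have "inner_m m f (\<lambda>_. 1) = (\<Sum>x\<in>UNIV. m x) + (\<Sum>x\<in>UNIV. if x = a then m b / 2 else 0)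
          - (\<Sum>x\<in>UNIV. if x = b then m b / 2 else 0)"
        unfolding inner_m_def sum.distrib[symmetric] sum_subtractf[symmetric]
        by (rule sum.cong) (use ma ab in \<open>auto simp: f_def algebra_simps\<close>)
      then have fm: "inner_m m f (\<lambda>_. 1) = 1" using assms(3) by (simp add: reversible_prob_def)
      have "0 < m b / m a" using ma mb by simp
      then have "f a \<noteq> f b" using ab by (simp add: f_def)
      then have "dirichlet P m f (\<lambda>x. ln (f x)) / Ent m f \<in> S"
        using fpos fm unfolding S_def by blast
      with True show False by simp
    qed
    then have "{ollivier P x y | x y. adj P x y} = {}" by (auto simp: adj_def)
    then show ?thesis using True unfolding alpha_mod_def S_def[symmetric] by simp
  qed
qed

end
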